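(* Let $G$ be a cyclic group of order $n\neq 4$ and let $\mathcal{A}$ be an $S$-ring over $G$ such that $\mathcal{A}=\mathbb{Z}G$ or $\mathcal{A}=\mathrm{Cyc}(K,G)$, where $K=\{\varepsilon,\sigma\}$ with $\varepsilon$ the identity and $\sigma:x\mapsto x^{-1}$. Suppose that $\varphi$ is an algebraic isomorphism from $\mathcal{A}$ to an $S$-ring $\mathcal{A}'$ over a finite abelian group $G'$. Then $G'\cong G$.
   Context: Let $G$ be a finite group with identity $e$; for $X\subseteq G$ write $\underline{X}=\sum_{x\in X}x\in\mathbb{Z}G$. An $S$-ring over $G$ is a subring $\mathcal{A}\subseteq\mathbb{Z}G$ for which there is a partition $\mathcal{S}(\mathcal{A})$ of $G$ (the basic sets) with $\{e\}\in\mathcal{S}(\mathcal{A})$, $X^{-1}\in\mathcal{S}(\mathcal{A})$ whenever $X\in\mathcal{S}(\mathcal{A})$, and $\mathcal{A}=\mathrm{Span}_{\mathbb{Z}}\{\underline{X}:X\in\mathcal{S}(\mathcal{A})\}$. Structure constants: $c^Z_{X,Y}$ is the number of $(x,y)\in X\times Y$ with $xy=z$ for fixed $z\in Z$. An algebraic isomorphism from $\mathcal{A}$ to an $S$-ring $\mathcal{A}'$ is a bijection $\varphi:\mathcal{S}(\mathcal{A})\to\mathcal{S}(\mathcal{A}')$ with $c^Z_{X,Y}=c^{Z^\varphi}_{X^\varphi,Y^\varphi}$ for all basic sets. For $K\leq\mathrm{Aut}(G)$, $\mathrm{Cyc}(K,G)$ is the $S$-ring over $G$ whose basic sets are the orbits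 of $K$ on $G$. *)

theory Defs
  imports "HOL-Algebra.Algebra"
begin

definition pair_count :: "('a, 'm) monoid_scheme \<Rightarrow> 'a set \<Rightarrow> 'a set \<Rightarrow> 'a \<Rightarrow> nat" where
  "pair_count G A B z = card {(x, y). x \<in> A \<and> y \<in> B \<and> x \<otimes>\<^bsub>G\<^esub> y = z}"

definition struct_const :: "('a, 'm) monoid_scheme \<Rightarrow> 'a set \<Rightarrow> 'a set \<Rightarrow> 'a set \<Rightarrow> nat" where
  "struct_const G A B C = pair_count G A B (SOME z. z \<in> C)"

definition inv_set :: "('a, 'm) monoid_scheme \<Rightarrow> 'a set \<Rightarrow> 'a set" where
  "inv_set G A = (\<lambda>x. m_inv G x) ` A"

text \<open>S is the set of basic sets of an S-ring over the finite group G.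
  Closure of the Z-span of the basic quantities under multiplication is written out:
  the product of two basic quantities has coefficients constant on each basic set.\<close>
definition S_ring :: "('a, 'm) monoid_scheme \<Rightarrow> 'a set set \<Rightarrow> bool" where
  "S_ring G S \<longleftrightarrow>
     (\<forall>A\<in>S. A \<noteq> {} \<and> A \<subseteq> carrier G) \<and> \<Union>S = carrier G \<and>
     (\<forall>A\<in>S. \<forall>B\<in>S. A \<noteq> B \<longrightarrow> A \<inter> B = {}) \<and>
     {\<one>\<^bsub>G\<^esub>} \<in> S \<and>
     (\<forall>A\<in>S. inv_set G A \<in> S) \<and>
     (\<forall>A\<in>S. \<forall>B\<in>S. \<forall>C\<in>S. \<forall>z\<in>C. \<forall>z'\<in>C. pair_count G A B z = pair_count G A B z')"

definition alg_iso :: "('a, 'm) monoid_scheme \<Rightarrow> 'a set set \<Rightarrow> ('b, 'n) monoid_scheme \<Rightarrow> 'b set set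
    \<Rightarrow> ('a set \<Rightarrow> 'b set) \<Rightarrow> bool" where
  "alg_iso G S G' S' \<phi> \<longleftrightarrow> bij_betw \<phi> S S' \<and>
     (\<forall>A\<in>S. \<forall>B\<in>S. \<forall>C\<in>S. struct_const G A B C = struct_const G' (\<phi> A) (\<phi> B) (\<phi> C))"

definition group_ring_basic_sets :: "('a, 'm) monoid_scheme \<Rightarrow> 'a set set" where
  "group_ring_basic_sets G = {{x} | x. x \<in> carrier G}"

definition cyc_basic_sets :: "('a, 'm) monoid_scheme \<Rightarrow> ('a \<Rightarrow> 'a) set \<Rightarrow> 'a set set" where
  "cyc_basic_sets G K = {{k x | k. k \<in> K} | x. x \<in> carrier G}"

end

theory Submission
  imports Defs
begin


lemma cyc_iso:
  assumes G: "group G" and H: "group H" and g: "g \<in> carrier G" and a: "a \<in> carrier H"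
    and cG: "carrier G = range (\<lambda>i::int. g [^]\<^bsub>G\<^esub> i)"
    and cH: "carrier H = range (\<lambda>i::int. a [^]\<^bsub>H\<^esub> i)"
    and o: "group.ord G g = group.ord H a"
  shows "G \<cong> H"
proof -
  interpret G: group G by fact
  interpret H: group H by fact
  have eqv: "g [^]\<^bsub>G\<^esub> i = g [^]\<^bsub>G\<^esub> j \<longleftrightarrow> a [^]\<^bsub>H\<^esub> i = a [^]\<^bsub>H\<^esub> j" for i j :: int
    using G.int_pow_eq[OF g] H.int_pow_eq[OF a] o by simp
  define h where "h x = a [^]\<^bsub>H\<^esub> (SOME i::int. g [^]\<^bsub>G\<^esub> i = x)" for x
  have hg: "h (g [^]\<^bsub>G\<^esub> i) = a [^]\<^bsub>H\<^esub> i" for i :: int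
  proof -
    have "g [^]\<^bsub>G\<^esub> (SOME j::int. g [^]\<^bsub>G\<^esub> j = g [^]\<^bsub>G\<^esub> i) = g [^]\<^bsub>G\<^esub> i"
      by (rule someI[of _ i]) simp
    then show ?thesis unfolding h_def using eqv by blast
  qed
  have "h \<in> hom G H"
  proof (rule homI)
    fix x assume "x \<in> carrier G"
    then obtain i :: int where "x = g [^]\<^bsub>G\<^esub> i" using cG by blast
    then show "h x \<in> carrier H" using hg a by (simp add: H.int_pow_closed)
  next
    fix x y assume "x \<in> carrier G" "y \<in> carrier G"
    then obtain i j :: int where "x = g [^]\<^bsub>G\<^esub> i" "y = g [^]\<^bsub>G\<^esub> j" using cG by blast
    then show "h (x \<otimes>\<^bsub>G\<^esub> y) = h x \<otimes>\<^bsub>H\<^esub> h y"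
      using hg a g by (simp add: G.int_pow_mult[symmetric] H.int_pow_mult[symmetric])
  qed
  moreover have "bij_betw h (carrier G) (carrier H)"
  proof (rule bij_betw_imageI)
    show "inj_on h (carrier G)"
    proof (rule inj_onI)
      fix x y assume "x \<in> carrier G" "y \<in> carrier G" "h x = h y"
      obtain i j :: int where "x = g [^]\<^bsub>G\<^esub> i" "y = g [^]\<^bsub>G\<^esub> j" using cG \<open>x \<in> carrier G\<close> \<open>y \<in> carrier G\<close> by blast
      then show "x = y" using hg eqv \<open>h x = h y\<close> by simp
    qed
    show "h ` carrier G = carrier H"
      unfolding cG cH image_image hg by simp
  qed
  ultimately have "h \<in> iso G H" by (simp add: iso_def)
  then show ?thesis unfolding is_iso_def by blast
qed



lemma S_ringD:
  assumes "S_ring G S"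
  shows S_ring_sub: "\<And>A. A \<in> S \<Longrightarrow> A \<subseteq> carrier G"
    and S_ring_ne: "\<And>A. A \<in> S \<Longrightarrow> A \<noteq> {}"
    and S_ring_Union: "\<Union>S = carrier G"
    and S_ring_disj0: "\<And>A B. A \<in> S \<Longrightarrow> B \<in> S \<Longrightarrow> A \<noteq> B \<Longrightarrow> A \<inter> B = {}"
    and S_ring_one: "{\<one>\<^bsub>G\<^esub>} \<in> S"
    and S_ring_inv: "\<And>A. A \<in> S \<Longrightarrow> inv_set G A \<in> S"
    and S_ring_const: "\<And>A B C z z'. A \<in> S \<Longrightarrow> B \<in> S \<Longrightarrow> C \<in> S \<Longrightarrow> z \<in> C \<Longrightarrow> z' \<in> C \<Longrightarrow> pair_count G A B z = pair_count G A B z'"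
  using assms unfolding S_ring_def by metis+

lemma S_ring_struct_const:
  assumes "S_ring G S" "A \<in> S" "B \<in> S" "C \<in> S" "z \<in> C"
  shows "struct_const G A B C = pair_count G A B z"
proof -
  have "(SOME z. z \<in> C) \<in> C" using assms(5) by (rule someI)
  then show ?thesis using assms S_ring_const[OF assms(1)] unfolding struct_const_def by blast
qed

lemma S_ring_disj:
  assumes "S_ring G S" "A \<in> S" "B \<in> S" "z \<in> A" "z \<in> B"
  shows "A = B"
  using assms S_ring_disj0[OF assms(1)] by blast

lemma pc_one:
  fixes G (structure)
  assumes "group G" "finite (carrier G)" "S_ring G S" "U \<in> S" "V \<in> S"
  shows "pair_count G U V \<one>\<^bsub>G\<^esub> = (if V = inv_set G U then card U else 0)"
proof -
  interpret group G by fact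
  have XG: "U \<subseteq> carrier G" and YG: "V \<subseteq> carrier G" using assms S_ring_sub by auto
  have fX: "finite U" using XG assms(2) finite_subset by blast
  have iX: "inv_set G U \<in> S" using assms S_ring_inv by auto
  show ?thesis
  proof (cases "V = inv_set G U")
    case True
    have "{(x, y). x \<in> U \<and> y \<in> V \<and> x \<otimes> y = \<one>} = (\<lambda>x. (x, inv x)) ` U"
    proof (intro Set.set_eqI iffI)
      fix p assume "p \<in> {(x, y). x \<in> U \<and> y \<in> V \<and> x \<otimes> y = \<one>}"
      then obtain x y where p: "p = (x, y)" "x \<in> U" "y \<in> V" "x \<otimes> y = \<one>" by blast
      then have "y \<in> carrier G" "x \<in> carrier G" using XG YG by auto
      then have "y = inv x" using p by (metis inv_comm inv_equality)
      then show "p \<in> (\<lambda>x. (x, inv x)) ` U" using p by blast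
    next
      fix p assume "p \<in> (\<lambda>x. (x, inv x)) ` U"
      then obtain x where p: "p = (x, inv x)" "x \<in> U" by blast
      then have "x \<in> carrier G" using XG by auto
      then show "p \<in> {(x, y). x \<in> U \<and> y \<in> V \<and> x \<otimes> y = \<one>}"
        using p True unfolding inv_set_def by auto
    qed
    then have "pair_count G U V \<one> = card ((\<lambda>x. (x, inv x)) ` U)"
      unfolding pair_count_def by simp
    also have "\<dots> = card U" by (rule card_image) (auto simp: inj_on_def)
    finally show ?thesis using True by simp
  next
    case False
    have E: "{(x, y). x \<in> U \<and> y \<in> V \<and> x \<otimes> y = \<one>} = {}"
    proof (rule ccontr)
      assume "\<not> ?thesis"
      then obtain x y where xy: "x \<in> U" "y \<in> V" "x \<otimes> y = \<one>" by auto
      then have "y = inv x" using XG YG by (metis inv_comm inv_equality subsetD)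
      then have "y \<in> inv_set G U" using xy unfolding inv_set_def by auto
      then have "V = inv_set G U" using S_ring_disj[OF assms(3) assms(5) iX xy(2)] by simp
      with False show False by simp
    qed
    show ?thesis unfolding pair_count_def E using False by simp
  qed
qed



theorem lemma5p1:
  fixes G :: "('a, 'm) monoid_scheme" and G' :: "('b, 'n) monoid_scheme"
    and S :: "'a set set" and S' :: "'b set set" and \<phi> :: "'a set \<Rightarrow> 'b set"
  assumes "group G" and "finite (carrier G)" and "cyclic_group G" and "order G \<noteq> 4"
    and "S_ring G S"
    and "S = group_ring_basic_sets G \<or> S = cyc_basic_sets G {id, \<lambda>x. m_inv G x}"
    and "comm_group G'" and "finite (carrier G')"
    and "S_ring G' S'"
    and "alg_iso G S G' S' \<phi>"
  shows "G \<cong> G'"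
proof -
  interpret G: group G by fact
  interpret H: comm_group G' by fact
  note SR = assms(5) and SR' = assms(9)
  have bij: "bij_betw \<phi> S S'" and
    sc: "\<And>A B C. A \<in> S \<Longrightarrow> B \<in> S \<Longrightarrow> C \<in> S \<Longrightarrow> struct_const G A B C = struct_const G' (\<phi> A) (\<phi> B) (\<phi> C)"
    using assms(10) unfolding alg_iso_def by auto
  define \<psi> where "\<psi> = inv_into S \<phi>"
  have \<psi>S: "\<psi> Z \<in> S" if "Z \<in> S'" for Z
    using bij_betwE[OF bij_betw_inv_into[OF bij]] that unfolding \<psi>_def by blast
  have \<phi>\<psi>: "\<phi> (\<psi> Z) = Z" if "Z \<in> S'" for Z
    using that bij unfolding \<psi>_def bij_betw_def by (simp add: f_inv_into_f)
  have \<phi>S: "\<phi> A \<in> S'" if "A \<in> S" for A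
    using bij_betwE[OF bij] that by blast
  have sub: "A \<subseteq> carrier G" if "A \<in> S" for A using S_ring_sub[OF SR] that by blast
  have sub': "A \<subseteq> carrier G'" if "A \<in> S'" for A using S_ring_sub[OF SR'] that by blast
  have finA: "finite A" if "A \<in> S" for A using sub[OF that] assms(2) finite_subset by blast
  have finA': "finite A" if "A \<in> S'" for A using sub'[OF that] assms(8) finite_subset by blast

  have e1: "\<phi> {\<one>\<^bsub>G\<^esub>} = {\<one>\<^bsub>G'\<^esub>}"
  proof -
    define E where "E = \<phi> {\<one>\<^bsub>G\<^esub>}"
    have E: "E \<in> S'" unfolding E_def using \<phi>S S_ring_one[OF SR] by blast
    define Yb where "Yb = \<psi> {\<one>\<^bsub>G'\<^esub>}"
    have Yb: "Yb \<in> S" "\<phi> Yb = {\<one>\<^bsub>G'\<^esub>}" unfolding Yb_def using \<psi>S \<phi>\<psi> S_ring_one[OF SR'] by auto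
    obtain y where y: "y \<in> Yb" using S_ring_ne[OF SR Yb(1)] by blast
    have yc: "y \<in> carrier G" using sub Yb y by blast
    have "struct_const G {\<one>\<^bsub>G\<^esub>} Yb Yb = pair_count G {\<one>\<^bsub>G\<^esub>} Yb y"
      using S_ring_struct_const[OF SR S_ring_one[OF SR] Yb(1) Yb(1) y] .
    also have "{(x, z). x \<in> {\<one>\<^bsub>G\<^esub>} \<and> z \<in> Yb \<and> x \<otimes>\<^bsub>G\<^esub> z = y} = {(\<one>\<^bsub>G\<^esub>, y)}"
      using y yc sub[OF Yb(1)] by auto
    then have "pair_count G {\<one>\<^bsub>G\<^esub>} Yb y = 1" unfolding pair_count_def by simp
    finally have "struct_const G' E {\<one>\<^bsub>G'\<^esub>} {\<one>\<^bsub>G'\<^esub>} = 1"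
      using sc[OF S_ring_one[OF SR] Yb(1) Yb(1)] Yb(2) unfolding E_def by simp
    moreover have "struct_const G' E {\<one>\<^bsub>G'\<^esub>} {\<one>\<^bsub>G'\<^esub>} = pair_count G' E {\<one>\<^bsub>G'\<^esub>} \<one>\<^bsub>G'\<^esub>"
      using S_ring_struct_const[OF SR' E S_ring_one[OF SR'] S_ring_one[OF SR']] by simp
    ultimately have "{(x, z). x \<in> E \<and> z \<in> {\<one>\<^bsub>G'\<^esub>} \<and> x \<otimes>\<^bsub>G'\<^esub> z = \<one>\<^bsub>G'\<^esub>} \<noteq> {}"
      unfolding pair_count_def by (metis card.empty zero_neq_one)
    then have "\<one>\<^bsub>G'\<^esub> \<in> E" using sub'[OF E] by auto
    then show ?thesis using S_ring_disj[OF SR' E S_ring_one[OF SR']] unfolding E_def by blast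
  qed
  have one_iff: "A = {\<one>\<^bsub>G\<^esub>}" if "A \<in> S" "\<one>\<^bsub>G\<^esub> \<in> A" for A
    using S_ring_disj[OF SR that(1) S_ring_one[OF SR] that(2)] by simp
  have one_iff': "A = {\<one>\<^bsub>G'\<^esub>}" if "A \<in> S'" "\<one>\<^bsub>G'\<^esub> \<in> A" for A
    using S_ring_disj[OF SR' that(1) S_ring_one[OF SR'] that(2)] by simp

  have val: "card (\<phi> A) = card A \<and> \<phi> (inv_set G A) = inv_set G' (\<phi> A)" if A: "A \<in> S" for A
  proof -
    define A' where "A' = \<phi> A"
    have A': "A' \<in> S'" unfolding A'_def using \<phi>S A by blast
    define I' where "I' = inv_set G' A'"
    have I': "I' \<in> S'" unfolding I'_def using S_ring_inv[OF SR' A'] .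
    define Bb where "Bb = \<psi> I'"
    have Bb: "Bb \<in> S" "\<phi> Bb = I'" unfolding Bb_def using \<psi>S \<phi>\<psi> I' by auto
    have "struct_const G' A' I' {\<one>\<^bsub>G'\<^esub>} = card A'"
      using S_ring_struct_const[OF SR' A' I' S_ring_one[OF SR']]
        pc_one[OF H.is_group assms(8) SR' A' I'] unfolding I'_def by simp
    moreover have "struct_const G A Bb {\<one>\<^bsub>G\<^esub>} = struct_const G' A' I' {\<one>\<^bsub>G'\<^esub>}"
      using sc[OF A Bb(1) S_ring_one[OF SR]] e1 Bb(2) unfolding A'_def by simp
    moreover have "struct_const G A Bb {\<one>\<^bsub>G\<^esub>} = (if Bb = inv_set G A then card A else 0)"
      using S_ring_struct_const[OF SR A Bb(1) S_ring_one[OF SR]]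
        pc_one[OF assms(1) assms(2) SR A Bb(1)] by simp
    moreover have "card A' > 0" using finA'[OF A'] S_ring_ne[OF SR' A'] by (simp add: card_gt_0_iff)
    ultimately have "Bb = inv_set G A" "card A' = card A" by (metis less_irrefl)+
    then show ?thesis using Bb(2) unfolding A'_def I'_def by simp
  qed

  have fS: "finite S"
    by (rule finite_subset[of _ "Pow (carrier G)"]) (use sub assms(2) in auto)
  have cardG: "card (carrier G) = sum card S"
  proof -
    have "card (\<Union>S) = sum card S"
      by (rule card_Union_disjoint) (use S_ring_disj0[OF SR] finA in \<open>auto simp: pairwise_def disjnt_def\<close>)
    then show ?thesis using S_ring_Union[OF SR] by simp
  qed
  have cardG': "card (carrier G') = sum card S'"
  proof -
    have "card (\<Union>S') = sum card S'"
      by (rule card_Union_disjoint) (use S_ring_disj0[OF SR'] finA' in \<open>auto simp: pairwise_def disjnt_def\<close>)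
    then show ?thesis using S_ring_Union[OF SR'] by simp
  qed
  have cardeq: "card (carrier G') = card (carrier G)"
  proof -
    have "sum card S' = sum (card \<circ> \<phi>) S" using bij unfolding bij_betw_def by (metis sum.reindex)
    also have "\<dots> = sum card S" using val by (intro sum.cong) auto
    finally show ?thesis using cardG cardG' by simp
  qed

  obtain g where g: "g \<in> carrier G" and cG: "carrier G = range (\<lambda>i::int. g [^]\<^bsub>G\<^esub> i)"
    using assms(3) G.cyclic_group by blast
  have ordg: "G.ord g = card (carrier G)"
    using G.generate_pow_card[OF g] G.generate_pow[OF g] cG by (simp add: full_SetCompr_eq)
  obtain Tb where Tb: "Tb \<in> S" "g \<in> Tb" using S_ring_Union[OF SR] g by blast
  have Tsub: "Tb \<subseteq> {g, inv\<^bsub>G\<^esub> g}"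
    using assms(6)
  proof
    assume "S = group_ring_basic_sets G"
    then show ?thesis using Tb unfolding group_ring_basic_sets_def by auto
  next
    assume "S = cyc_basic_sets G {id, \<lambda>x. inv\<^bsub>G\<^esub> x}"
    then obtain x where x: "x \<in> carrier G" "Tb = {k x | k. k \<in> {id, \<lambda>x. inv\<^bsub>G\<^esub> x}}"
      using Tb unfolding cyc_basic_sets_def by auto
    then have Tx: "Tb = {x, inv\<^bsub>G\<^esub> x}" by (auto, metis id_apply)
    then have "g = x \<or> g = inv\<^bsub>G\<^esub> x" using Tb by auto
    then show ?thesis using Tx x by auto
  qed
  have T2: "Tb = {g, inv\<^bsub>G\<^esub> g} \<and> g \<noteq> inv\<^bsub>G\<^esub> g" if "card Tb = 2"
  proof -
    have "card {g, inv\<^bsub>G\<^esub> g} \<le> 2" by (simp add: card_insert_if)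
    then have "Tb = {g, inv\<^bsub>G\<^esub> g}" using that Tsub by (metis card_subset_eq finite.emptyI finite.insertI le_antisym card_mono)
    moreover have "g \<noteq> inv\<^bsub>G\<^esub> g" using that calculation by auto
    ultimately show ?thesis by simp
  qed
  define T' where "T' = \<phi> Tb"
  have T': "T' \<in> S'" unfolding T'_def using \<phi>S Tb by blast
  have cT': "card T' = card Tb" unfolding T'_def using val Tb by blast
  have "card Tb \<le> 2" using card_mono[OF _ Tsub] by (simp add: card_insert_if) (metis card_insert_le card_1_singleton_iff le_SucI numeral_2_eq_2)
  moreover have "card T' > 0" using finA'[OF T'] S_ring_ne[OF SR' T'] by (simp add: card_gt_0_iff)
  ultimately have c12: "card T' = 1 \<or> card T' = 2" using cT' by linarith
  obtain a where a: "a \<in> carrier G'" and Ta: "T' \<subseteq> range (\<lambda>i::int. a [^]\<^bsub>G'\<^esub> i)"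
  proof (cases "card T' = 1")
    case True
    then obtain a where "T' = {a}" by (rule card_1_singletonE)
    moreover then have "a \<in> carrier G'" using sub'[OF T'] by auto
    ultimately show ?thesis using that[of a] by (metis H.int_pow_1 empty_subsetI insert_subset rangeI)
  next
    case False
    then have c2: "card T' = 2" using c12 by simp
    then have Tg: "Tb = {g, inv\<^bsub>G\<^esub> g}" "g \<noteq> inv\<^bsub>G\<^esub> g" using T2 cT' by auto
    have "inv_set G Tb = Tb" unfolding inv_set_def using Tg g by auto
    then have invT': "inv_set G' T' = T'" using val[OF Tb(1)] unfolding T'_def by simp
    obtain a b where ab: "T' = {a, b}" "a \<noteq> b" using c2 card_2_iff by metis
    have abc: "a \<in> carrier G'" "b \<in> carrier G'" using ab sub'[OF T'] by auto
    have ia: "inv\<^bsub>G'\<^esub> a \<in> {a, b}" and ib: "inv\<^bsub>G'\<^esub> b \<in> {a, b}"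
      using invT' ab unfolding inv_set_def by blast+
    show ?thesis
    proof (cases "inv\<^bsub>G'\<^esub> a = b")
      case True
      have "a = a [^]\<^bsub>G'\<^esub> (1::int)" "b = a [^]\<^bsub>G'\<^esub> (-1::int)"
        using abc True by (simp_all add: H.int_pow_neg)
      then have "T' \<subseteq> range (\<lambda>i::int. a [^]\<^bsub>G'\<^esub> i)" using ab by blast
      then show ?thesis using that abc by blast
    next
      case False
      then have iaa: "inv\<^bsub>G'\<^esub> a = a" using ia by auto
      have ibb: "inv\<^bsub>G'\<^esub> b = b"
      proof -
        have "inv\<^bsub>G'\<^esub> b \<noteq> a" using iaa abc ab(2) by (metis H.inv_inv)
        then show ?thesis using ib by auto
      qed
      define c where "c = a \<otimes>\<^bsub>G'\<^esub> b"
      have cc: "c \<in> carrier G'" unfolding c_def using abc by simp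
      have c1: "c \<noteq> \<one>\<^bsub>G'\<^esub>"
      proof
        assume "c = \<one>\<^bsub>G'\<^esub>"
        then have "inv\<^bsub>G'\<^esub> b = a" unfolding c_def using abc by (metis H.inv_equality)
        then show False using ibb ab(2) by simp
      qed
      obtain Zp where Zp: "Zp \<in> S'" "c \<in> Zp" using S_ring_Union[OF SR'] cc by blast
      define Zb where "Zb = \<psi> Zp"
      have Zb: "Zb \<in> S" "\<phi> Zb = Zp" unfolding Zb_def using \<psi>S \<phi>\<psi> Zp by auto
      have "{(a, b), (b, a)} \<subseteq> {(x, y). x \<in> T' \<and> y \<in> T' \<and> x \<otimes>\<^bsub>G'\<^esub> y = c}"
        using ab abc H.m_comm unfolding c_def by auto
      moreover have "finite {(x, y). x \<in> T' \<and> y \<in> T' \<and> x \<otimes>\<^bsub>G'\<^esub> y = c}"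
        by (rule finite_subset[of _ "T' \<times> T'"]) (use finA'[OF T'] in auto)
      ultimately have "card {(a, b), (b, a)} \<le> pair_count G' T' T' c"
        unfolding pair_count_def by (rule card_mono[rotated])
      then have pc2: "pair_count G' T' T' c \<ge> 2" using ab(2) by simp
      have "struct_const G Tb Tb Zb = pair_count G' T' T' c"
        using sc[OF Tb(1) Tb(1) Zb(1)] Zb(2) S_ring_struct_const[OF SR' T' T' Zp] unfolding T'_def by simp
      have Zne: "Zb \<noteq> {\<one>\<^bsub>G\<^esub>}" using Zb(2) e1 Zp(2) c1 by auto
      obtain z where z: "z \<in> Zb" using S_ring_ne[OF SR Zb(1)] by blast
      have z1: "z \<noteq> \<one>\<^bsub>G\<^esub>" using one_iff[OF Zb(1)] z Zne by blast
      have pcz: "pair_count G Tb Tb z \<ge> 2"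
        using S_ring_struct_const[OF SR Tb(1) Tb(1) Zb(1) z] pc2
          \<open>struct_const G Tb Tb Zb = pair_count G' T' T' c\<close> by simp
      define P where "P = {(x, y). x \<in> Tb \<and> y \<in> Tb \<and> x \<otimes>\<^bsub>G\<^esub> y = z}"
      have Psub: "P \<subseteq> {(g, g), (inv\<^bsub>G\<^esub> g, inv\<^bsub>G\<^esub> g)} \<inter> {p. fst p \<otimes>\<^bsub>G\<^esub> snd p = z}"
        unfolding P_def using Tg g z1 by auto
      have gg: "g \<otimes>\<^bsub>G\<^esub> g = z \<and> inv\<^bsub>G\<^esub> g \<otimes>\<^bsub>G\<^esub> inv\<^bsub>G\<^esub> g = z"
      proof (rule ccontr)
        assume "\<not> ?thesis"
        then have "P \<subseteq> {(g, g)} \<or> P \<subseteq> {(inv\<^bsub>G\<^esub> g, inv\<^bsub>G\<^esub> g)}" using Psub by auto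
        moreover have "card {(g, g)} = 1" "card {(inv\<^bsub>G\<^esub> g, inv\<^bsub>G\<^esub> g)} = 1" by simp_all
        ultimately have "card P \<le> 1" by (metis card_mono finite.emptyI finite.insertI)
        then show False using pcz unfolding pair_count_def P_def by simp
      qed
      have g4: "g [^]\<^bsub>G\<^esub> (4::nat) = \<one>\<^bsub>G\<^esub>"
      proof -
        have "g [^]\<^bsub>G\<^esub> (4::nat) = (g \<otimes>\<^bsub>G\<^esub> g) \<otimes>\<^bsub>G\<^esub> (g \<otimes>\<^bsub>G\<^esub> g)"
          using g by (simp add: numeral_eq_Suc G.m_assoc)
        also have "\<dots> = (inv\<^bsub>G\<^esub> g \<otimes>\<^bsub>G\<^esub> inv\<^bsub>G\<^esub> g) \<otimes>\<^bsub>G\<^esub> (g \<otimes>\<^bsub>G\<^esub> g)" using gg by simp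
        also have "\<dots> = \<one>\<^bsub>G\<^esub>" using g by (simp add: G.m_assoc[symmetric]) (simp add: G.m_assoc)
        finally show ?thesis .
      qed
      have g2: "g [^]\<^bsub>G\<^esub> (2::nat) \<noteq> \<one>\<^bsub>G\<^esub>"
        using g gg z1 by (simp add: numeral_eq_Suc)
      have d4: "G.ord g dvd 4" using G.pow_eq_id[OF g] g4 by blast
      have nd2: "\<not> G.ord g dvd 2" using G.pow_eq_id[OF g] g2 by blast
      have "G.ord g \<le> 4" using dvd_imp_le[OF d4] by simp
      moreover have "G.ord g \<noteq> 0"
      proof
        assume "G.ord g = 0" with d4 show False by simp
      qed
      ultimately have "G.ord g \<in> {1,2,3,4}" by auto
      then have "G.ord g = 4" using d4 nd2 by auto
      then have False using assms(4) ordg unfolding order_def by simp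
      then show ?thesis by simp
    qed
  qed
  define Hs where "Hs = range (\<lambda>i::int. a [^]\<^bsub>G'\<^esub> i)"
  have Hmult: "x \<otimes>\<^bsub>G'\<^esub> y \<in> Hs" if xy: "x \<in> Hs" "y \<in> Hs" for x y
  proof -
    obtain i j :: int where "x = a [^]\<^bsub>G'\<^esub> i" "y = a [^]\<^bsub>G'\<^esub> j" using xy unfolding Hs_def by blast
    then have "x \<otimes>\<^bsub>G'\<^esub> y = a [^]\<^bsub>G'\<^esub> (i + j)" using a by (simp add: H.int_pow_mult)
    then show ?thesis unfolding Hs_def by blast
  qed
  have ind: "\<forall>Zb\<in>S. g [^]\<^bsub>G\<^esub> k \<in> Zb \<longrightarrow> \<phi> Zb \<subseteq> Hs" for k :: nat
  proof (induction k)
    case 0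
    show ?case
    proof (intro ballI impI)
      fix Zb assume "Zb \<in> S" "g [^]\<^bsub>G\<^esub> (0::nat) \<in> Zb"
      then have "Zb = {\<one>\<^bsub>G\<^esub>}" using one_iff by simp
      moreover have "\<one>\<^bsub>G'\<^esub> \<in> Hs" unfolding Hs_def using a by (metis int_pow_0 rangeI)
      ultimately show "\<phi> Zb \<subseteq> Hs" using e1 by simp
    qed
  next
    case (Suc k)
    show ?case
    proof (intro ballI impI)
      fix Zb assume Zb: "Zb \<in> S" "g [^]\<^bsub>G\<^esub> Suc k \<in> Zb"
      have gk: "g [^]\<^bsub>G\<^esub> k \<in> carrier G" using g by simp
      obtain W where W: "W \<in> S" "g [^]\<^bsub>G\<^esub> k \<in> W" using S_ring_Union[OF SR] gk by blast
      have IH: "\<phi> W \<subseteq> Hs" using Suc.IH W by blast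
      have "(g, g [^]\<^bsub>G\<^esub> k) \<in> {(x, y). x \<in> Tb \<and> y \<in> W \<and> x \<otimes>\<^bsub>G\<^esub> y = g [^]\<^bsub>G\<^esub> Suc k}"
        using Tb W g by (simp add: G.nat_pow_Suc2[symmetric])
      moreover have "finite {(x, y). x \<in> Tb \<and> y \<in> W \<and> x \<otimes>\<^bsub>G\<^esub> y = g [^]\<^bsub>G\<^esub> Suc k}"
        by (rule finite_subset[of _ "Tb \<times> W"]) (use finA[OF Tb(1)] finA[OF W(1)] in auto)
      ultimately have "pair_count G Tb W (g [^]\<^bsub>G\<^esub> Suc k) > 0"
        unfolding pair_count_def by (simp add: card_gt_0_iff) blast
      then have pos: "struct_const G' T' (\<phi> W) (\<phi> Zb) > 0"
        using sc[OF Tb(1) W(1) Zb(1)] S_ring_struct_const[OF SR Tb(1) W(1) Zb] unfolding T'_def by simp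
      show "\<phi> Zb \<subseteq> Hs"
      proof
        fix z' assume z': "z' \<in> \<phi> Zb"
        have "pair_count G' T' (\<phi> W) z' > 0"
          using pos S_ring_struct_const[OF SR' T' \<phi>S[OF W(1)] \<phi>S[OF Zb(1)] z'] by simp
        then have "{(x, y). x \<in> T' \<and> y \<in> \<phi> W \<and> x \<otimes>\<^bsub>G'\<^esub> y = z'} \<noteq> {}"
          unfolding pair_count_def by (metis card.empty less_irrefl)
        then obtain x y where "x \<in> T'" "y \<in> \<phi> W" "z' = x \<otimes>\<^bsub>G'\<^esub> y" by auto
        then show "z' \<in> Hs" using Ta IH Hmult unfolding Hs_def by blast
      qed
    qed
  qed
  have ordpos: "G.ord g > 0" using G.ord_ge_1[OF assms(2) g] by simp
  have cG'H: "carrier G' = Hs"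
  proof
    show "carrier G' \<subseteq> Hs"
    proof
      fix z' assume "z' \<in> carrier G'"
      then obtain Zp where Zp: "Zp \<in> S'" "z' \<in> Zp" using S_ring_Union[OF SR'] by blast
      obtain z where z: "z \<in> \<psi> Zp" using S_ring_ne[OF SR \<psi>S[OF Zp(1)]] by blast
      then have "z \<in> carrier G" using sub \<psi>S Zp(1) by blast
      then obtain i :: int where i: "z = g [^]\<^bsub>G\<^esub> i" using cG by blast
      define n where "n = int (G.ord g)"
      have "g [^]\<^bsub>G\<^esub> (i mod n) = g [^]\<^bsub>G\<^esub> i"
        using G.int_pow_eq[OF g, of "i mod n" i] unfolding n_def by simp
      moreover have "i mod n \<ge> 0" using ordpos unfolding n_def by simp
      ultimately have "z = g [^]\<^bsub>G\<^esub> (nat (i mod n))" using i by (metis int_pow_int nat_0_le)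
      then have "\<phi> (\<psi> Zp) \<subseteq> Hs" using ind \<psi>S[OF Zp(1)] z by blast
      then show "z' \<in> Hs" using \<phi>\<psi>[OF Zp(1)] Zp(2) by blast
    qed
    show "Hs \<subseteq> carrier G'" unfolding Hs_def using a by auto
  qed

  have "H.ord a = card (carrier G')"
    using H.generate_pow_card[OF a] H.generate_pow[OF a] cG'H unfolding Hs_def by (simp add: full_SetCompr_eq)
  then have "G.ord g = H.ord a" using ordg cardeq by simp
  then show ?thesis
    using cyc_iso[OF assms(1) H.is_group g a cG] cG'H unfolding Hs_def by blast
qed

end
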